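(* For all positive integers $\Delta$ and positive reals $\xi$ there are positive constants $\nu$ and $c$ such that if $p\ge c(\log n/n)^{1/\Delta}$, then the following holds a.a.s. for $\Gamma=G(n,p)$ on vertex set $V$. Let $X$ be any subset of $V$ and $\mathcal{F}$ any family of pairwise disjoint $\Delta$-sets in $V\setminus X$. If $|X|\le\nu np^\Delta|\mathcal{F}|$ and $|X|,|\mathcal{F}|\le\xi n$, then $\mathrm{stars}_\Gamma(X,\mathcal{F})\le p^\Delta|X||\mathcal{F}|+6\xi np^\Delta|\mathcal{F}|$.
   Context: $G(n,p)$ is the random graph on $[n]$ with edges present independently with probability $p$; a.a.s. means with probability tending to $1$ as $n\to\infty$ (simultaneously for all such $X,\mathcal{F}$). For a graph $G$, a vertex set $X$ and a family $\mathcal{F}$ of pairwise disjoint $\ell$-sets outside $X$, $\mathrm{stars}_G(X,\mathcal{F})$ is the number of pairs $(x,F)$ with $x\in X$, $F\in\mathcal{F}$ and $F\subseteq N_G(x)$. *)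

theory Defs
  imports Complex_Main
begin

text \<open>Graphs on vertex set {0..<n} are represented by their edge sets: sets of
  2-element vertex sets.\<close>

definition all_edges :: "nat \<Rightarrow> nat set set" where
  "all_edges n = {e. \<exists>x y. x < n \<and> y < n \<and> x \<noteq> y \<and> e = {x, y}}"

definition gnp_prob :: "nat \<Rightarrow> real \<Rightarrow> (nat set set \<Rightarrow> bool) \<Rightarrow> real" where
  "gnp_prob n p P =
     (\<Sum>E | E \<subseteq> all_edges n \<and> P E.
        p ^ card E * (1 - p) ^ (card (all_edges n) - card E))"

definition nbhd :: "nat set set \<Rightarrow> nat \<Rightarrow> nat set" where
  "nbhd E x = {y. {x, y} \<in> E}"

definition stars :: "nat set set \<Rightarrow> nat set \<Rightarrow> nat set set \<Rightarrow> nat" where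
  "stars E X \<F> = card {(x, F). x \<in> X \<and> F \<in> \<F> \<and> F \<subseteq> nbhd E x}"

end

theory Submission
  imports Defs "HOL-Real_Asymp.Real_Asymp"
begin


lemma sum_Pow_binom:
  fixes p :: real
  assumes "finite W"
  shows "(\<Sum>E\<in>Pow W. p ^ card E * (1 - p) ^ (card W - card E)) = 1"
  using assms
proof (induction W rule: finite_induct)
  case empty then show ?case by simp
next
  case (insert a W)
  have fin: "finite (Pow W)" using insert by simp
  have "Pow (insert a W) = Pow W \<union> insert a ` Pow W" by (rule Pow_insert)
  moreover have "Pow W \<inter> insert a ` Pow W = {}" using insert by auto
  moreover have "inj_on (insert a) (Pow W)" using insert.hyps unfolding inj_on_def by (metis PowD insert_ident subsetD)
  ultimately have "(\<Sum>E\<in>Pow (insert a W). p ^ card E * (1 - p) ^ (card (insert a W) - card E))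
     = (\<Sum>E\<in>Pow W. p ^ card E * (1 - p) ^ (Suc (card W) - card E))
       + (\<Sum>E\<in>Pow W. p ^ card (insert a E) * (1 - p) ^ (Suc (card W) - card (insert a E)))"
    using insert fin by (simp add: sum.union_disjoint sum.reindex)
  also have "\<dots> = (\<Sum>E\<in>Pow W. p ^ card E * (1 - p) ^ (card W - card E))"
  proof -
    have "p ^ card E * (1 - p) ^ (Suc (card W) - card E) +
          p ^ card (insert a E) * (1 - p) ^ (Suc (card W) - card (insert a E))
         = p ^ card E * (1 - p) ^ (card W - card E)" if "E \<in> Pow W" for E
    proof -
      have "E \<subseteq> W" "finite E" "a \<notin> E" using that insert finite_subset by auto
      then have ce: "card E \<le> card W" "card (insert a E) = Suc (card E)"
        using insert card_mono by auto
      then have "Suc (card W) - card E = Suc (card W - card E)" by simp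
      then show ?thesis using ce by (simp add: algebra_simps)
    qed
    then show ?thesis by (simp add: sum.distrib[symmetric])
  qed
  finally show ?case using insert by simp
qed

lemma finite_all_edges: "finite (all_edges n)"
proof -
  have "all_edges n \<subseteq> Pow {0..<n}" unfolding all_edges_def by auto
  then show ?thesis by (rule finite_subset) simp
qed

lemma gnp_weight_nonneg: "0 \<le> p \<Longrightarrow> p \<le> 1 \<Longrightarrow> 0 \<le> p ^ card E * (1 - p) ^ k"
  for p :: real by simp

lemma gnp_mono:
  assumes "0 \<le> p" "p \<le> 1" "\<And>E. P E \<Longrightarrow> Q E"
  shows "gnp_prob n p P \<le> gnp_prob n p Q"
  unfolding gnp_prob_def
  by (rule sum_mono2) (use assms finite_all_edges in auto)

lemma gnp_nonneg:
  assumes "0 \<le> p" "p \<le> 1"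
  shows "0 \<le> gnp_prob n p P"
  unfolding gnp_prob_def by (rule sum_nonneg) (use assms in auto)

lemma gnp_false: "gnp_prob n p (\<lambda>E. False) = 0"
  unfolding gnp_prob_def by simp

lemma gnp_disj:
  assumes "0 \<le> p" "p \<le> 1"
  shows "gnp_prob n p (\<lambda>E. P E \<or> Q E) \<le> gnp_prob n p P + gnp_prob n p Q"
proof -
  let ?w = "\<lambda>E. p ^ card E * (1 - p) ^ (card (all_edges n) - card E)"
  let ?A = "{E. E \<subseteq> all_edges n \<and> P E}" and ?B = "{E. E \<subseteq> all_edges n \<and> Q E}"
  have fin: "finite ?A" "finite ?B" using finite_all_edges by simp_all
  have eq: "{E. E \<subseteq> all_edges n \<and> (P E \<or> Q E)} = ?A \<union> ?B" by auto
  have "0 \<le> sum ?w (?A \<inter> ?B)" by (rule sum_nonneg) (use assms in auto)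
  then show ?thesis unfolding gnp_prob_def eq sum_Un[OF fin] by simp
qed

lemma gnp_ex:
  assumes "0 \<le> p" "p \<le> 1" "finite I"
  shows "gnp_prob n p (\<lambda>E. \<exists>i\<in>I. P i E) \<le> (\<Sum>i\<in>I. gnp_prob n p (P i))"
  using assms(3)
proof (induction I rule: finite_induct)
  case empty then show ?case by (simp add: gnp_false)
next
  case (insert a I)
  have "gnp_prob n p (\<lambda>E. \<exists>i\<in>insert a I. P i E) = gnp_prob n p (\<lambda>E. P a E \<or> (\<exists>i\<in>I. P i E))"
    by simp
  also have "\<dots> \<le> gnp_prob n p (P a) + gnp_prob n p (\<lambda>E. \<exists>i\<in>I. P i E)"
    by (rule gnp_disj[OF assms(1,2)])
  also have "\<dots> \<le> gnp_prob n p (P a) + (\<Sum>i\<in>I. gnp_prob n p (P i))" using insert by simp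
  finally show ?case using insert by simp
qed

lemma gnp_compl:
  assumes "0 \<le> p" "p \<le> 1"
  shows "gnp_prob n p P + gnp_prob n p (\<lambda>E. \<not> P E) = 1"
proof -
  let ?w = "\<lambda>E. p ^ card E * (1 - p) ^ (card (all_edges n) - card E)"
  let ?A = "{E. E \<subseteq> all_edges n \<and> P E}" and ?B = "{E. E \<subseteq> all_edges n \<and> \<not> P E}"
  have fin: "finite ?A" "finite ?B" using finite_all_edges by simp_all
  have "sum ?w ?A + sum ?w ?B = sum ?w (?A \<union> ?B)"
    by (rule sum.union_disjoint[symmetric]) (use fin in auto)
  also have "?A \<union> ?B = Pow (all_edges n)" by auto
  also have "sum ?w (Pow (all_edges n)) = 1" by (rule sum_Pow_binom[OF finite_all_edges])
  finally show ?thesis unfolding gnp_prob_def .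
qed

lemma gnp_subset:
  assumes "0 \<le> p" "p \<le> 1" "A \<subseteq> all_edges n"
  shows "gnp_prob n p (\<lambda>E. A \<subseteq> E) = p ^ card A"
proof -
  let ?U = "all_edges n"
  let ?w = "\<lambda>E. p ^ card E * (1 - p) ^ (card ?U - card E)"
  have finU: "finite ?U" by (rule finite_all_edges)
  have finA: "finite A" using assms(3) finU finite_subset by blast
  have img: "{E. E \<subseteq> ?U \<and> A \<subseteq> E} = (\<lambda>E'. A \<union> E') ` Pow (?U - A)" 
  proof
    show "{E. E \<subseteq> ?U \<and> A \<subseteq> E} \<subseteq> (\<lambda>E'. A \<union> E') ` Pow (?U - A)"
    proof
      fix E assume "E \<in> {E. E \<subseteq> ?U \<and> A \<subseteq> E}"
      then have "E = A \<union> (E - A)" "E - A \<in> Pow (?U - A)" by auto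
      then show "E \<in> (\<lambda>E'. A \<union> E') ` Pow (?U - A)" by blast
    qed
  qed (use assms(3) in auto)
  have inj: "inj_on (\<lambda>E'. A \<union> E') (Pow (?U - A))"
    unfolding inj_on_def by blast
  have "gnp_prob n p (\<lambda>E. A \<subseteq> E) = (\<Sum>E'\<in>Pow (?U - A). ?w (A \<union> E'))"
    unfolding gnp_prob_def img by (simp add: sum.reindex[OF inj])
  also have "\<dots> = (\<Sum>E'\<in>Pow (?U - A). p ^ card A * (p ^ card E' * (1 - p) ^ (card (?U - A) - card E')))"
  proof (rule sum.cong[OF refl])
    fix E' assume "E' \<in> Pow (?U - A)"
    then have sub: "E' \<subseteq> ?U - A" by simp
    have finE: "finite E'" using sub finU finite_subset by blast
    have c1: "card (A \<union> E') = card A + card E'"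
      using sub finA finE by (subst card_Un_disjoint) auto
    have c2: "card (?U - A) = card ?U - card A" using assms(3) finA by (simp add: card_Diff_subset)
    have c3: "card E' \<le> card (?U - A)" using sub finU by (simp add: card_mono)
    have c4: "card A \<le> card ?U" using assms(3) finU by (simp add: card_mono)
    show "?w (A \<union> E') = p ^ card A * (p ^ card E' * (1 - p) ^ (card (?U - A) - card E'))"
      using c1 c2 c3 c4 by (simp add: power_add algebra_simps)
  qed
  also have "\<dots> = p ^ card A" 
    using sum_Pow_binom[of "?U - A" p] finU by (simp add: sum_distrib_left[symmetric])
  finally show ?thesis .
qed

definition ed :: "(nat \<times> nat set) set \<Rightarrow> nat set set" where
  "ed S = \<Union>((\<lambda>(x,F). (\<lambda>v. {x,v}) ` F) ` S)"

lemma ed_props: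
  assumes X: "X \<subseteq> {0..<n}" and FF: "\<forall>F\<in>\<F>. F \<subseteq> {0..<n} - X \<and> card F = \<Delta>"
    and pd: "pairwise disjnt \<F>" and S: "S \<subseteq> X \<times> \<F>" and finS: "finite S"
  shows "ed S \<subseteq> all_edges n" "card (ed S) = \<Delta> * card S"
proof -
  show "ed S \<subseteq> all_edges n"
  proof
    fix e assume "e \<in> ed S"
    then obtain x F v where "(x,F) \<in> S" "v \<in> F" "e = {x,v}" unfolding ed_def by auto
    then have "x \<in> X" "F \<in> \<F>" using S by auto
    then have "v \<in> {0..<n} - X" using FF \<open>v \<in> F\<close> by blast
    then have "x < n" "v < n" "x \<noteq> v" using \<open>x \<in> X\<close> X by auto
    then show "e \<in> all_edges n" unfolding all_edges_def using \<open>e = {x,v}\<close> by blast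
  qed
  define g where "g = (\<lambda>(x::nat,F::nat set). (\<lambda>v. {x,v}) ` F)"
  have edg: "ed S = \<Union>(g ` S)" unfolding ed_def g_def by simp
  have gi: "g (x,F) = (\<lambda>v. {x,v}) ` F" for x F unfolding g_def by simp
  have card1: "card (g i) = \<Delta>" if "i \<in> S" for i
  proof -
    obtain x F where i: "i = (x,F)" by fastforce
    have "inj_on (\<lambda>v. {x,v}) F" unfolding inj_on_def by (auto simp: doubleton_eq_iff)
    then have "card (g i) = card F" unfolding i gi by (rule card_image)
    moreover have "F \<in> \<F>" using that S i by auto
    ultimately show ?thesis using FF by auto
  qed
  have fin1: "finite (g i)" if "i \<in> S" for i
  proof -
    obtain x F where i: "i = (x,F)" by fastforce
    have "F \<in> \<F>" using that S i by auto
    then have "F \<subseteq> {0..<n}" using FF by auto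
    then have "finite F" using finite_subset by blast
    then show ?thesis unfolding i gi by simp
  qed
  have disj: "g i \<inter> g j = {}" if "i \<in> S" "j \<in> S" "i \<noteq> j" for i j
  proof (rule ccontr)
    obtain x F x' F' where ij: "i = (x,F)" "j = (x',F')" by fastforce
    assume "g i \<inter> g j \<noteq> {}"
    then obtain v w where vw: "v \<in> F" "w \<in> F'" "{x,v} = {x',w}" unfolding ij gi by auto
    have mem: "x \<in> X" "x' \<in> X" "F \<in> \<F>" "F' \<in> \<F>" using that ij S by auto
    have nv: "v \<notin> X" "w \<notin> X" using FF vw(1,2) mem(3,4) by blast+
    have "x = x' \<and> v = w"
    proof -
      have "(x = x' \<and> v = w) \<or> (x = w \<and> v = x')" using vw(3) by (simp add: doubleton_eq_iff)
      then show ?thesis using nv mem(1,2) by blast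
    qed
    then have "x = x'" "v = w" by auto
    have "F = F'"
    proof (rule ccontr)
      assume "F \<noteq> F'"
      then have "disjnt F F'" using pd mem(3,4) unfolding pairwise_def by blast
      then show False using vw(1,2) \<open>v = w\<close> unfolding disjnt_def by blast
    qed
    then show False using that ij \<open>x = x'\<close> by simp
  qed
  have "card (ed S) = (\<Sum>i\<in>S. card (g i))"
    unfolding edg
    by (rule card_UN_disjoint[OF finS]) (use fin1 disj in blast)+
  also have "\<dots> = (\<Sum>i\<in>S. \<Delta>)" by (rule sum.cong[OF refl]) (rule card1)
  finally show "card (ed S) = \<Delta> * card S" by simp
qed

lemma star_bound:
  fixes p :: real
  assumes p: "0 \<le> p" "p \<le> 1" and X: "X \<subseteq> {0..<n}" and FF: "\<forall>F\<in>\<F>. F \<subseteq> {0..<n} - X \<and> card F = \<Delta>"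
    and pd: "pairwise disjnt \<F>" and finF: "finite \<F>"
  shows "gnp_prob n p (\<lambda>E. k \<le> stars E X \<F>) \<le> real (card X * card \<F> choose k) * (p ^ \<Delta>) ^ k"
proof -
  have finX: "finite X" using X finite_subset by blast
  let ?SS = "{S. S \<subseteq> X \<times> \<F> \<and> card S = k}"
  have finXF: "finite (X \<times> \<F>)" using finX finF by simp
  have "?SS \<subseteq> Pow (X \<times> \<F>)" by auto
  then have finSS: "finite ?SS" using finXF finite_subset by blast
  have "gnp_prob n p (\<lambda>E. k \<le> stars E X \<F>) \<le> gnp_prob n p (\<lambda>E. \<exists>S\<in>?SS. ed S \<subseteq> E)"
  proof (rule gnp_mono[OF p])
    fix E assume k: "k \<le> stars E X \<F>"
    let ?SP = "{(x, F). x \<in> X \<and> F \<in> \<F> \<and> F \<subseteq> nbhd E x}"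
    have sub: "?SP \<subseteq> X \<times> \<F>" by auto
    have "k \<le> card ?SP" using k unfolding stars_def .
    then obtain S where S: "S \<subseteq> ?SP" "card S = k"
      by (rule obtain_subset_with_card_n)
    have "ed S \<subseteq> E"
    proof
      fix e assume "e \<in> ed S"
      then obtain x F v where xF: "(x,F) \<in> S" "v \<in> F" "e = {x,v}" unfolding ed_def by auto
      then have "F \<subseteq> nbhd E x" using S(1) by auto
      then show "e \<in> E" using xF unfolding nbhd_def by auto
    qed
    moreover have "S \<in> ?SS" using S sub by auto
    ultimately show "\<exists>S\<in>?SS. ed S \<subseteq> E" by blast
  qed
  also have "\<dots> \<le> (\<Sum>S\<in>?SS. gnp_prob n p (\<lambda>E. ed S \<subseteq> E))"
    by (rule gnp_ex[OF p finSS])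
  also have "\<dots> = (\<Sum>S\<in>?SS. (p ^ \<Delta>) ^ k)"
  proof (rule sum.cong[OF refl])
    fix S assume "S \<in> ?SS"
    then have S: "S \<subseteq> X \<times> \<F>" "card S = k" by auto
    have finS: "finite S" using S finXF finite_subset by blast
    show "gnp_prob n p (\<lambda>E. ed S \<subseteq> E) = (p ^ \<Delta>) ^ k"
      using gnp_subset[OF p ed_props(1)[OF X FF pd S(1) finS]] ed_props(2)[OF X FF pd S(1) finS] S(2)
      by (simp add: power_mult)
  qed
  also have "\<dots> = real (card ?SS) * (p ^ \<Delta>) ^ k" by simp
  also have "card ?SS = card X * card \<F> choose k"
    using n_subsets[OF finXF, of k] by (simp add: card_cartesian_product)
  finally show ?thesis by simp
qed



lemma pow_div_fact_le_exp:
  fixes x :: real assumes "0 \<le> x" shows "x ^ n / fact n \<le> exp x"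
proof -
  have s: "(\<lambda>n. x^n / fact n) sums exp x" using exp_converges[of x] by (simp add: divide_inverse mult.commute)
  have "(\<Sum>i\<in>{n}. x^i / fact i) \<le> suminf (\<lambda>i. x^i / fact i)"
    by (rule sum_le_suminf) (use s assms in \<open>auto simp: sums_iff\<close>)
  then show ?thesis using s by (simp add: sums_iff)
qed

lemma binom_le_exp:
  assumes "j \<ge> 1"
  shows "real (m choose j) \<le> (exp 1 * real m / real j) ^ j"
proof -
  have f: "real (m choose j) * fact j \<le> real m ^ j"
    using binomial_fact_pow[of m j] by (metis of_nat_fact of_nat_le_iff of_nat_mult of_nat_power)
  have "real j ^ j / fact j \<le> exp (real j)" by (rule pow_div_fact_le_exp) simp
  also have "exp (real j) = exp 1 ^ j" by (metis exp_of_nat_mult mult.right_neutral)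
  finally have g: "real j ^ j \<le> exp 1 ^ j * fact j" by (simp add: divide_le_eq)
  have jp: "real j ^ j > 0" using assms by simp
  have "real (m choose j) * real j ^ j \<le> real (m choose j) * (exp 1 ^ j * fact j)"
    using g by (simp add: mult_left_mono)
  also have "\<dots> = exp 1 ^ j * (real (m choose j) * fact j)" by simp
  also have "\<dots> \<le> exp 1 ^ j * real m ^ j" using f by (simp add: mult_left_mono)
  finally have "real (m choose j) \<le> exp 1 ^ j * real m ^ j / real j ^ j"
    using jp by (simp add: le_divide_eq)
  also have "\<dots> = (exp 1 * real m / real j) ^ j" by (simp add: power_mult_distrib power_divide)
  finally show ?thesis .
qed

lemma binom_le_pow_real: "real (m choose j) \<le> real m ^ j"
  using binomial_fact_pow[of m j] fact_ge_1[of j]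
  by (metis (mono_tags, lifting) dual_order.trans mult_le_cancel1 mult_numeral_1_right numeral_One of_nat_le_iff of_nat_power nat_mult_1_right le_square)

lemma term_bound:
  fixes \<xi> q \<nu> K L :: real and n s f M \<Delta> k :: nat
  assumes n: "n \<ge> 2" and q: "q > 0" and D: "\<Delta> > 0" and xi: "\<xi> > 0"
    and L: "L = ln 6 - 1" and K: "K = 4 * real \<Delta> / (3 * \<xi> * L)"
    and qn: "q * real n \<ge> K * ln (real n)"
    and M: "M \<ge> 1" and Mb: "(exp 1 / 6) ^ (M - 1) \<le> 6 * \<xi> / exp 1 ^ 2"
    and nu: "\<nu> = 3 * \<xi> / real M"
    and s: "s \<ge> 1" "real s \<le> \<xi> * real n" "real s \<le> \<nu> * real n * q * real f"
    and f: "f \<ge> 1"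
    and k: "k = nat \<lceil>6 * \<xi> * real n * q * real f\<rceil>"
  shows "real (n choose s) * real ((n choose \<Delta>) choose f) * (real (s * f choose k) * q ^ k)
         \<le> 1 / real n ^ 3"
proof -
  define e :: real where "e = exp 1"
  define t where "t = 6 * \<xi> * real n * q * real f"
  define a where "a = e * real s / (6 * \<xi> * real n)"
  have e: "e \<ge> 2" "e \<le> 3" unfolding e_def using exp_le exp_ge_add_one_self[of 1] by auto
  have nr: "real n \<ge> 2" using n by simp
  have tpos: "t > 0" unfolding t_def using xi nr q f by simp
  have kt: "real k \<ge> t" unfolding k t_def[symmetric] by linarith
  have k1: "k \<ge> 1" using kt tpos by linarith
  have apos: "a > 0" unfolding a_def using e xi nr s by simp
  have ale: "a \<le> e / 6" unfolding a_def using s(2) e xi nr by (simp add: field_simps)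
  have b1: "real (n choose s) \<le> (e * real n / real s) ^ s"
    unfolding e_def by (rule binom_le_exp[OF s(1)])
  have b3: "real ((n choose \<Delta>) choose f) \<le> real n ^ (\<Delta> * f)"
  proof -
    have "real ((n choose \<Delta>) choose f) \<le> real (n choose \<Delta>) ^ f" by (rule binom_le_pow_real)
    also have "\<dots> \<le> (real n ^ \<Delta>) ^ f" by (rule power_mono[OF binom_le_pow_real]) simp
    finally show ?thesis by (simp add: power_mult)
  qed
  have b2: "real (s * f choose k) * q ^ k \<le> a ^ k"
  proof -
    have "real (s * f choose k) * q ^ k \<le> (e * real (s * f) / real k) ^ k * q ^ k"
      using binom_le_exp[OF k1, of "s*f"] q unfolding e_def by (simp add: mult_right_mono)
    also have "\<dots> = (e * real s * real f * q / real k) ^ k" by (simp add: power_mult_distrib[symmetric] mult.assoc)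
    also have "\<dots> \<le> a ^ k"
    proof (rule power_mono)
      have "e * real s * real f * q / real k \<le> e * real s * real f * q / t"
        using kt tpos e s q f by (intro divide_left_mono) auto
      also have "\<dots> = a" unfolding a_def t_def using xi nr q f by (simp add: field_simps)
      finally show "e * real s * real f * q / real k \<le> a" .
      show "0 \<le> e * real s * real f * q / real k" using e q by simp
    qed
    finally show ?thesis .
  qed
  have Ms: "2 * real (M * s) \<le> t"
  proof -
    have "real M * real s \<le> real M * (\<nu> * real n * q * real f)" using s(3) by (simp add: mult_left_mono)
    also have "\<dots> = 3 * \<xi> * real n * q * real f" unfolding nu using M by simp
    finally show ?thesis unfolding t_def by (simp add: algebra_simps)
  qed
  have kMs: "M * s \<le> k" using Ms kt tpos by linarith
  define j where "j = k - M * s"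
  have kj: "k = M * s + j" unfolding j_def using kMs by simp
  have "real j = real k - real M * real s" using kMs unfolding j_def by (simp add: of_nat_diff)
  then have jt: "real j \<ge> t / 2" using Ms kt by simp
  have b4: "a ^ k \<le> a ^ (M * s) * (e / 6) ^ j"
    unfolding kj power_add using apos ale by (intro mult_left_mono power_mono) auto
  have b5: "(e * real n / real s) ^ s * a ^ (M * s) \<le> 1"
  proof -
    have "(e * real n / real s) * a ^ M = (e^2 / (6 * \<xi>)) * a ^ (M - 1)"
    proof -
      have "a ^ M = a * a ^ (M - 1)" using M by (metis One_nat_def Suc_pred less_eq_Suc_le power_Suc) 
      then show ?thesis unfolding a_def using nr s xi by (simp add: field_simps power2_eq_square)
    qed
    also have "\<dots> \<le> (e^2 / (6 * \<xi>)) * (e / 6) ^ (M - 1)"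
      using apos ale xi by (intro mult_left_mono power_mono) auto
    also have "\<dots> \<le> (e^2 / (6 * \<xi>)) * (6 * \<xi> / e ^ 2)"
      using Mb xi unfolding e_def[symmetric] by (intro mult_left_mono) auto
    also have "\<dots> = 1" using xi e by (simp add: field_simps)
    finally have "(e * real n / real s) * a ^ M \<le> 1" .
    moreover have "(e * real n / real s) * a ^ M \<ge> 0" using e apos by simp
    ultimately have "((e * real n / real s) * a ^ M) ^ s \<le> 1" by (simp add: power_le_one)
    moreover have "((e * real n / real s) * a ^ M) ^ s = (e * real n / real s) ^ s * a ^ (M * s)"
      by (simp only: power_mult_distrib power_mult)
    ultimately show ?thesis by simp
  qed
  have b6: "(e / 6) ^ j * real n ^ (\<Delta> * f) \<le> 1 / real n ^ 3"
  proof -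
    have "ln (exp 1) < ln (6::real)" using exp_le by (subst ln_less_cancel_iff) auto
    then have Lpos: "L > 0" unfolding L by simp
    have lnn: "ln (real n) > 0" using nr by simp
    have jL: "real j * L \<ge> 4 * real \<Delta> * real f * ln (real n)"
    proof -
      have "real j * L \<ge> t / 2 * L" using jt Lpos by (simp add: mult_right_mono)
      moreover have "t / 2 \<ge> 3 * \<xi> * real f * (K * ln (real n))"
      proof -
        have "3 * \<xi> * real f * (K * ln (real n)) \<le> 3 * \<xi> * real f * (q * real n)"
          using qn xi f by (intro mult_left_mono) auto
        then show ?thesis unfolding t_def by (simp add: algebra_simps)
      qed
      ultimately have "real j * L \<ge> 3 * \<xi> * real f * (K * ln (real n)) * L"
        using Lpos by (meson mult_right_mono less_imp_le order_trans)
      moreover have "3 * \<xi> * real f * (K * ln (real n)) * L = 4 * real \<Delta> * real f * ln (real n)"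
        unfolding K using Lpos xi by (simp add: field_simps)
      ultimately show ?thesis by simp
    qed
    have "e / 6 = exp (- L)" unfolding e_def L by (simp add: exp_diff)
    moreover have "exp (real j * (- L)) = exp (- L) ^ j" by (rule exp_of_nat_mult)
    ultimately have "(e / 6) ^ j = exp (- (real j * L))" by simp
    moreover have "real n ^ (\<Delta> * f) = exp (real (\<Delta> * f) * ln (real n))"
    proof -
      have "exp (real (\<Delta> * f) * ln (real n)) = exp (ln (real n)) ^ (\<Delta> * f)" by (rule exp_of_nat_mult)
      then show ?thesis using nr by simp
    qed
    ultimately have "(e / 6) ^ j * real n ^ (\<Delta> * f) = exp (- (real j * L)) * exp (real (\<Delta> * f) * ln (real n))"
      by simp
    also have "\<dots> = exp (- (real j * L) + real (\<Delta> * f) * ln (real n))" by (rule exp_add[symmetric])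
    also have "\<dots> \<le> exp (- 3 * ln (real n))"
    proof (subst exp_le_cancel_iff)
      define P where "P = real \<Delta> * real f * ln (real n)"
      have "(1::nat) \<le> \<Delta> * f" using D f by (simp add: Suc_le_eq)
      then have "real (\<Delta> * f) \<ge> 1" by (metis of_nat_1 of_nat_le_iff)
      then have "1 * ln (real n) \<le> real (\<Delta> * f) * ln (real n)" using lnn by (intro mult_right_mono) auto
      then have h1: "ln (real n) \<le> P" unfolding P_def by simp
      have h2: "real j * L \<ge> 4 * P" using jL unfolding P_def by (simp add: algebra_simps)
      have h3: "real (\<Delta> * f) * ln (real n) = P" unfolding P_def by simp
      show "- (real j * L) + real (\<Delta> * f) * ln (real n) \<le> - 3 * ln (real n)"
        using h1 h2 h3 by linarith
    qed
    also have "\<dots> = 1 / real n ^ 3" proof -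
      have "exp (real (3::nat) * ln (real n)) = exp (ln (real n)) ^ 3" by (rule exp_of_nat_mult)
      then have "exp (3 * ln (real n)) = real n ^ 3" using nr by simp
      then show ?thesis by (simp add: exp_minus divide_inverse)
    qed
    finally show ?thesis .
  qed
  have "real (n choose s) * real ((n choose \<Delta>) choose f) * (real (s * f choose k) * q ^ k)
     \<le> (e * real n / real s) ^ s * real n ^ (\<Delta> * f) * a ^ k"
    using b1 b2 b3 e q by (intro mult_mono) auto
  also have "\<dots> \<le> (e * real n / real s) ^ s * real n ^ (\<Delta> * f) * (a ^ (M * s) * (e / 6) ^ j)"
    using b4 e by (intro mult_left_mono) auto
  also have "\<dots> = ((e * real n / real s) ^ s * a ^ (M * s)) * ((e / 6) ^ j * real n ^ (\<Delta> * f))"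
    by (simp add: algebra_simps)
  also have "\<dots> \<le> 1 * (1 / real n ^ 3)"
    using b5 b6 e by (intro mult_mono) auto
  finally show ?thesis by simp
qed


lemma gnp_ex_le:
  assumes "0 \<le> p" "p \<le> 1" "finite I" "\<And>i. i \<in> I \<Longrightarrow> gnp_prob n p (P i) \<le> b i"
  shows "gnp_prob n p (\<lambda>E. \<exists>i\<in>I. P i E) \<le> (\<Sum>i\<in>I. b i)"
  using gnp_ex[OF assms(1-3), where P=P and n=n] sum_mono[of I "\<lambda>i. gnp_prob n p (P i)" b] assms(4) by simp

theorem lemma6p3:
  fixes \<Delta> :: nat and \<xi> :: real
  assumes "\<Delta> > 0" and "\<xi> > 0"
  shows "\<exists>\<nu> > 0. \<exists>c > 0. \<forall>p :: nat \<Rightarrow> real.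
    (\<forall>n. 0 \<le> p n \<and> p n \<le> 1) \<longrightarrow>
    (\<forall>\<^sub>F n in sequentially. p n \<ge> c * (ln (real n) / real n) powr (1 / real \<Delta>)) \<longrightarrow>
    ((\<lambda>n. gnp_prob n (p n) (\<lambda>E.
        \<forall>X \<F>. X \<subseteq> {0..<n} \<longrightarrow>
          (\<forall>F\<in>\<F>. F \<subseteq> {0..<n} - X \<and> card F = \<Delta>) \<longrightarrow>
          pairwise disjnt \<F> \<longrightarrow>
          real (card X) \<le> \<nu> * real n * p n ^ \<Delta> * real (card \<F>) \<longrightarrow>
          real (card X) \<le> \<xi> * real n \<longrightarrow>
          real (card \<F>) \<le> \<xi> * real n \<longrightarrow>
          real (stars E X \<F>) \<le> p n ^ \<Delta> * real (card X) * real (card \<F>)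
                                + 6 * \<xi> * real n * p n ^ \<Delta> * real (card \<F>)))
     \<longlonglongrightarrow> 1)"
proof -
  note D = assms(1) and xi = assms(2)
  have e3: "exp 1 \<le> (3::real)" by (rule exp_le)
  have "exp 1 / 6 < (1::real)" using e3 by simp
  moreover have "6 * \<xi> / exp 1 ^ 2 > 0" using xi by simp
  ultimately obtain M0 where M0: "(exp 1 / 6) ^ M0 < 6 * \<xi> / exp 1 ^ 2"
    using real_arch_pow_inv by blast
  define M where "M = Suc M0"
  define \<nu> where "\<nu> = 3 * \<xi> / real M"
  define L :: real where "L = ln 6 - 1"
  define K where "K = 4 * real \<Delta> / (3 * \<xi> * L)"
  define c where "c = K powr (1 / real \<Delta>)"
  have "ln (exp 1) < ln (6::real)" using e3 by (subst ln_less_cancel_iff) auto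
  then have Lpos: "L > 0" unfolding L_def by simp
  have Kpos: "K > 0" unfolding K_def using Lpos xi D by simp
  have nupos: "\<nu> > 0" unfolding \<nu>_def M_def using xi by simp
  have cpos: "c > 0" unfolding c_def using Kpos by simp
  have M1: "M \<ge> 1" unfolding M_def by simp
  have Mb: "(exp 1 / 6) ^ (M - 1) \<le> 6 * \<xi> / exp 1 ^ 2" unfolding M_def using M0 by simp
  show ?thesis
  proof (rule exI[of _ \<nu>], intro conjI nupos, rule exI[of _ c], intro conjI cpos allI impI)
    fix p :: "nat \<Rightarrow> real"
    assume p01: "\<forall>n. 0 \<le> p n \<and> p n \<le> 1"
    assume hev: "\<forall>\<^sub>F n in sequentially. p n \<ge> c * (ln (real n) / real n) powr (1 / real \<Delta>)"
    define Q where "Q = (\<lambda>n E.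
        \<forall>X \<F>. X \<subseteq> {0..<n} \<longrightarrow>
          (\<forall>F\<in>\<F>. F \<subseteq> {0..<n} - X \<and> card F = \<Delta>) \<longrightarrow>
          pairwise disjnt \<F> \<longrightarrow>
          real (card X) \<le> \<nu> * real n * p n ^ \<Delta> * real (card \<F>) \<longrightarrow>
          real (card X) \<le> \<xi> * real n \<longrightarrow>
          real (card \<F>) \<le> \<xi> * real n \<longrightarrow>
          real (stars E X \<F>) \<le> p n ^ \<Delta> * real (card X) * real (card \<F>)
                                + 6 * \<xi> * real n * p n ^ \<Delta> * real (card \<F>))"
    define lb where "lb = (\<lambda>n::nat. 1 - real n * (\<xi> * real n + 1) / real n ^ 3)"
    have key: "lb n \<le> gnp_prob n (p n) (Q n)"
      if n2: "n \<ge> 2" and pn: "p n \<ge> c * (ln (real n) / real n) powr (1 / real \<Delta>)" for n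
    proof -
      define q where "q = p n ^ \<Delta>"
      have nr: "real n \<ge> 2" using n2 by simp
      define x where "x = ln (real n) / real n"
      have xpos: "x > 0" unfolding x_def using nr by simp
      define z where "z = (K * x) powr (1 / real \<Delta>)"
      have zpos: "z > 0" unfolding z_def using Kpos xpos by simp
      have cz: "c * x powr (1 / real \<Delta>) = z" unfolding c_def z_def
        using Kpos xpos by (simp add: powr_mult)
      have "z ^ \<Delta> = z powr real \<Delta>" using zpos by (simp add: powr_realpow)
      also have "\<dots> = K * x" unfolding z_def using D Kpos xpos by (simp add: powr_powr)
      finally have zD: "z ^ \<Delta> = K * x" .
      have "z \<le> p n" using pn cz unfolding x_def by simp
      then have "z ^ \<Delta> \<le> q" unfolding q_def using zpos by (intro power_mono) auto
      then have qKx: "K * x \<le> q" using zD by simp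
      have qpos: "q > 0" using qKx Kpos xpos by (smt (verit) mult_pos_pos)
      have qn: "q * real n \<ge> K * ln (real n)"
      proof -
        have "K * x * real n \<le> q * real n" using qKx nr by (intro mult_right_mono) auto
        moreover have "K * x * real n = K * ln (real n)" unfolding x_def using nr by simp
        ultimately show ?thesis by simp
      qed
      have pn01: "0 \<le> p n" "p n \<le> 1" using p01 by auto
      define m where "m = nat \<lceil>\<xi> * real n\<rceil>"
      define DD where "DD = {F. F \<subseteq> {0..<n} \<and> card F = \<Delta>}"
      define kk where "kk = (\<lambda>f::nat. nat \<lceil>6 * \<xi> * real n * q * real f\<rceil>)"
      define cnd where "cnd = (\<lambda>(s::nat) (f::nat). real s \<le> \<xi> * real n \<and> real s \<le> \<nu> * real n * q * real f)"
      define B where "B = (\<lambda>s f X \<F> E. (\<forall>F\<in>\<F>. F \<subseteq> {0..<n} - X \<and> card F = \<Delta>) \<and> pairwise disjnt \<F>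
                              \<and> cnd s f \<and> kk f \<le> stars E X \<F>)"
      define XX where "XX = (\<lambda>s::nat. {X. X \<subseteq> {0..<n} \<and> card X = s})"
      define FF where "FF = (\<lambda>f::nat. {\<F>. \<F> \<subseteq> DD \<and> card \<F> = f})"
      define T where "T = (\<lambda>s f. if cnd s f then real (s * f choose kk f) * q ^ kk f else 0)"
      have finDD: "finite DD" unfolding DD_def
        by (rule finite_subset[of _ "Pow {0..<n}"]) auto
      have cardDD: "card DD = n choose \<Delta>" unfolding DD_def using n_subsets[of "{0..<n}" \<Delta>] by simp
      have Tnn: "T s f \<ge> 0" for s f unfolding T_def using qpos by simp
      have stepA: "\<exists>s\<in>{1..n}. \<exists>f\<in>{1..m}. \<exists>X\<in>XX s. \<exists>\<F>\<in>FF f. B s f X \<F> E" if nQ: "\<not> Q n E" for E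
      proof -
        obtain X \<F> where X: "X \<subseteq> {0..<n}" and hF: "\<forall>F\<in>\<F>. F \<subseteq> {0..<n} - X \<and> card F = \<Delta>"
          and pd: "pairwise disjnt \<F>"
          and h1: "real (card X) \<le> \<nu> * real n * p n ^ \<Delta> * real (card \<F>)"
          and h2: "real (card X) \<le> \<xi> * real n" and h3: "real (card \<F>) \<le> \<xi> * real n"
          and h4: "\<not> real (stars E X \<F>) \<le> p n ^ \<Delta> * real (card X) * real (card \<F>)
                                + 6 * \<xi> * real n * p n ^ \<Delta> * real (card \<F>)"
          using nQ unfolding Q_def by blast
        define s where "s = card X"
        define f where "f = card \<F>"
        define t where "t = 6 * \<xi> * real n * q * real f"
        have FsubD: "\<F> \<subseteq> DD" unfolding DD_def using hF by auto
        have finF: "finite \<F>" using FsubD finDD finite_subset by blast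
        have finX: "finite X" using X finite_subset by blast
        have "0 \<le> q * real s * real f" using qpos by simp
        then have st: "real (stars E X \<F>) > t" using h4 unfolding t_def q_def s_def f_def by (simp add: algebra_simps)
        have tnn: "t \<ge> 0" unfolding t_def using xi qpos by simp
        then have "stars E X \<F> > 0" using st by linarith
        then have "{(x, F). x \<in> X \<and> F \<in> \<F> \<and> F \<subseteq> nbhd E x} \<noteq> {}" unfolding stars_def by (metis card.empty less_irrefl)
        then have ne: "X \<noteq> {}" "\<F> \<noteq> {}" by auto
        have s1: "s \<ge> 1" unfolding s_def using ne finX by (simp add: Suc_le_eq card_gt_0_iff)
        have f1: "f \<ge> 1" unfolding f_def using ne finF by (simp add: Suc_le_eq card_gt_0_iff)
        have sn: "s \<le> n" unfolding s_def using card_mono[OF _ X] by simp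
        have "real f \<le> real_of_int \<lceil>\<xi> * real n\<rceil>" using h3 f_def le_of_int_ceiling[of "\<xi> * real n"] by linarith
        then have fm: "f \<le> m" unfolding m_def by linarith
        have "\<lceil>t\<rceil> \<le> int (stars E X \<F>)" using st by (simp add: ceiling_le_iff)
        then have kst: "kk f \<le> stars E X \<F>" unfolding kk_def t_def by (simp add: nat_le_iff)
        have c: "cnd s f" unfolding cnd_def s_def f_def using h1 h2 unfolding q_def by simp
        have "B s f X \<F> E" unfolding B_def using hF pd c kst by simp
        moreover have "X \<in> XX s" unfolding XX_def s_def using X by simp
        moreover have "\<F> \<in> FF f" unfolding FF_def f_def using FsubD by simp
        moreover have "s \<in> {1..n}" "f \<in> {1..m}" using s1 sn f1 fm by auto
        ultimately show ?thesis by blast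
      qed
      have inner: "gnp_prob n (p n) (B s f X \<F>) \<le> T s f" if "X \<in> XX s" "\<F> \<in> FF f" for s f X \<F>
      proof (cases "cnd s f \<and> (\<forall>F\<in>\<F>. F \<subseteq> {0..<n} - X \<and> card F = \<Delta>) \<and> pairwise disjnt \<F>")
        case True
        have X: "X \<subseteq> {0..<n}" "card X = s" using that unfolding XX_def by auto
        have F: "\<F> \<subseteq> DD" "card \<F> = f" using that unfolding FF_def by auto
        have finF: "finite \<F>" using F finDD finite_subset by blast
        have "gnp_prob n (p n) (B s f X \<F>) \<le> gnp_prob n (p n) (\<lambda>E. kk f \<le> stars E X \<F>)"
          by (rule gnp_mono[OF pn01]) (simp add: B_def)
        also have "\<dots> \<le> real (card X * card \<F> choose kk f) * (p n ^ \<Delta>) ^ kk f"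
          by (rule star_bound[OF pn01 X(1)]) (use True finF in auto)
        also have "\<dots> = T s f" unfolding T_def q_def using True X F by simp
        finally show ?thesis .
      next
        case False
        have "gnp_prob n (p n) (B s f X \<F>) \<le> gnp_prob n (p n) (\<lambda>E. False)"
          by (rule gnp_mono[OF pn01]) (use False in \<open>auto simp: B_def\<close>)
        then show ?thesis using Tnn[of s f] by (simp add: gnp_false)
      qed
      have finXX: "finite (XX s)" for s unfolding XX_def by (rule finite_subset[of _ "Pow {0..<n}"]) auto
      have finFF: "finite (FF f)" for f unfolding FF_def using finDD by (rule_tac finite_subset[of _ "Pow DD"]) auto
      have cXX: "card (XX s) = n choose s" for s unfolding XX_def using n_subsets[of "{0..<n}" s] by simp
      have cFF: "card (FF f) = (n choose \<Delta>) choose f" for f unfolding FF_def using n_subsets[OF finDD, of f] cardDD by simp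
      have tb: "real (card (XX s)) * real (card (FF f)) * T s f \<le> 1 / real n ^ 3" if "s \<in> {1..n}" "f \<in> {1..m}" for s f
      proof (cases "cnd s f")
        case True
        have "real (n choose s) * real ((n choose \<Delta>) choose f) * (real (s * f choose kk f) * q ^ kk f) \<le> 1 / real n ^ 3"
          by (rule term_bound[OF n2 qpos D xi L_def K_def qn M1 Mb \<nu>_def])
             (use that True in \<open>auto simp: cnd_def kk_def\<close>)
        then show ?thesis using True unfolding T_def cXX cFF by simp
      next
        case False
        then show ?thesis unfolding T_def by simp
      qed
      have "gnp_prob n (p n) (\<lambda>E. \<not> Q n E)
          \<le> gnp_prob n (p n) (\<lambda>E. \<exists>s\<in>{1..n}. \<exists>f\<in>{1..m}. \<exists>X\<in>XX s. \<exists>\<F>\<in>FF f. B s f X \<F> E)"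
        by (rule gnp_mono[OF pn01]) (rule stepA)
      also have "\<dots> \<le> (\<Sum>s\<in>{1..n}. \<Sum>f\<in>{1..m}. \<Sum>X\<in>XX s. \<Sum>\<F>\<in>FF f. T s f)"
        by (intro gnp_ex_le[OF pn01] finite_atLeastAtMost finXX finFF inner) 
      also have "\<dots> = (\<Sum>s\<in>{1..n}. \<Sum>f\<in>{1..m}. real (card (XX s)) * real (card (FF f)) * T s f)"
        by (simp add: mult.assoc)
      also have "\<dots> \<le> (\<Sum>s\<in>{1..n}. \<Sum>f\<in>{1..m}. 1 / real n ^ 3)"
        by (intro sum_mono tb)
      also have "\<dots> = real n * real m / real n ^ 3" by simp
      also have "\<dots> \<le> real n * (\<xi> * real n + 1) / real n ^ 3"
      proof -
        have "\<xi> * real n \<ge> 0" using xi nr by simp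
        then have "real m = real_of_int \<lceil>\<xi> * real n\<rceil>" unfolding m_def by simp
        then have "real m \<le> \<xi> * real n + 1" using ceiling_correct[of "\<xi> * real n"] by linarith
        then show ?thesis using nr by (intro divide_right_mono mult_left_mono) auto
      qed
      finally have "gnp_prob n (p n) (\<lambda>E. \<not> Q n E) \<le> real n * (\<xi> * real n + 1) / real n ^ 3" .
      then show ?thesis unfolding lb_def using gnp_compl[OF pn01, of n "Q n"] by simp
    qed
    have up: "gnp_prob n (p n) (Q n) \<le> 1" for n
      using gnp_compl[of "p n" n "Q n"] gnp_nonneg[of "p n" n "\<lambda>E. \<not> Q n E"] p01 by simp
    have lim: "lb \<longlonglongrightarrow> 1" unfolding lb_def by real_asymp
    have ev: "\<forall>\<^sub>F n in sequentially. lb n \<le> gnp_prob n (p n) (Q n)"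
      using hev eventually_ge_at_top[of "2::nat"] by eventually_elim (rule key)
    have "(\<lambda>n. gnp_prob n (p n) (Q n)) \<longlonglongrightarrow> 1"
      by (rule tendsto_sandwich[OF ev _ lim tendsto_const]) (simp add: up)
    then show "(\<lambda>n. gnp_prob n (p n) (\<lambda>E.
        \<forall>X \<F>. X \<subseteq> {0..<n} \<longrightarrow>
          (\<forall>F\<in>\<F>. F \<subseteq> {0..<n} - X \<and> card F = \<Delta>) \<longrightarrow>
          pairwise disjnt \<F> \<longrightarrow>
          real (card X) \<le> \<nu> * real n * p n ^ \<Delta> * real (card \<F>) \<longrightarrow>
          real (card X) \<le> \<xi> * real n \<longrightarrow>
          real (card \<F>) \<le> \<xi> * real n \<longrightarrow>
          real (stars E X \<F>) \<le> p n ^ \<Delta> * real (card X) * real (card \<F>)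
                                + 6 * \<xi> * real n * p n ^ \<Delta> * real (card \<F>)))
     \<longlonglongrightarrow> 1" unfolding Q_def .
  qed
qed

end
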